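(* Fix $r>0$ and $q>r/2$, and let $\alpha_{\mathsf{high}}(q,r)=(\sqrt q-\sqrt{r/2})^2$. For each $N$ let $\Upsilon_\lambda\sim\mathrm{Pois}(\lambda)$ and $\Upsilon_{\lambda'}\sim\mathrm{Pois}(\lambda')$ be independent, with $\lambda=\lambda(N)$ satisfying $\lambda/\log N\to\infty$ and $\lambda'=\lambda+\sqrt{2\lambda r\log(N)(1+o(1))}$. Then, as $N\to\infty$, $$\Pr\big(\pi(\Upsilon_\lambda,\Upsilon_{\lambda'})\le N^{-q}\big)\ge N^{-\alpha_{\mathsf{high}}(q,r)+o(1)}$$ and $$\Pr\big(\pi(\Upsilon_\lambda,\Upsilon_{\lambda'})\le N^{-q}\big)\le N^{-1+o(1)}+N^{-\alpha_{\mathsf{high}}(q,r)+o(1)}.$$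
   Context: For nonnegative integers $x,y$ put $m=x+y$, let $B\sim\mathrm{Bin}(m,1/2)$ and $\pi(x,y)=\Pr(|B-m/2|\ge|x-m/2|)$ (two-sided exact binomial test P-value). Here $o(1)$ denotes a deterministic quantity tending to $0$ as $N\to\infty$. *)

theory Defs
  imports "HOL-Probability.Probability"
begin

definition pval :: "nat \<Rightarrow> nat \<Rightarrow> real" where
  "pval x y = (let m = x + y in
     measure_pmf.prob (binomial_pmf m (1/2))
       {k. \<bar>real k - real m / 2\<bar> \<ge> \<bar>real x - real m / 2\<bar>})"

definition alpha_high :: "real \<Rightarrow> real \<Rightarrow> real" where
  "alpha_high q r = (sqrt q - sqrt (r / 2))^2"

end

theory Submission
  imports Defs "HOL-Real_Asymp.Real_Asymp"
begin


lemma prob_le_pmf: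
  assumes "\<And>z. z \<in> A \<Longrightarrow> pmf p z \<le> c * pmf q z" "c \<ge> 0"
  shows "measure_pmf.prob p A \<le> c * measure_pmf.prob q A"
proof -
  have "emeasure (measure_pmf p) A = (\<integral>\<^sup>+ z. ennreal (pmf p z) * indicator A z \<partial>count_space UNIV)"
    by (subst nn_integral_indicator[symmetric]) (auto simp: nn_integral_measure_pmf)
  also have "\<dots> \<le> (\<integral>\<^sup>+ z. ennreal c * (ennreal (pmf q z) * indicator A z) \<partial>count_space UNIV)"
    by (intro nn_integral_mono) (auto simp: indicator_def assms ennreal_mult'[symmetric] ennreal_leI)
  also have "\<dots> = ennreal c * (\<integral>\<^sup>+ z. ennreal (pmf q z) * indicator A z \<partial>count_space UNIV)"
    by (rule nn_integral_cmult) auto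
  also have "(\<integral>\<^sup>+ z. ennreal (pmf q z) * indicator A z \<partial>count_space UNIV) = emeasure (measure_pmf q) A"
    by (subst nn_integral_indicator[symmetric]) (auto simp: nn_integral_measure_pmf)
  finally have "ennreal (measure_pmf.prob p A) \<le> ennreal (c * measure_pmf.prob q A)"
    by (simp add: measure_pmf.emeasure_eq_measure ennreal_mult' assms)
  thus ?thesis using assms by (simp add: ennreal_le_iff)
qed

lemma prob_ge_pmf:
  assumes "\<And>z. z \<in> A \<Longrightarrow> pmf p z \<ge> c * pmf q z" "c \<ge> 0"
  shows "measure_pmf.prob p A \<ge> c * measure_pmf.prob q A"
proof -
  have "emeasure (measure_pmf p) A = (\<integral>\<^sup>+ z. ennreal (pmf p z) * indicator A z \<partial>count_space UNIV)"
    by (subst nn_integral_indicator[symmetric]) (auto simp: nn_integral_measure_pmf)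
  also have "\<dots> \<ge> (\<integral>\<^sup>+ z. ennreal c * (ennreal (pmf q z) * indicator A z) \<partial>count_space UNIV)"
    by (intro nn_integral_mono) (auto simp: indicator_def assms ennreal_mult'[symmetric] ennreal_leI)
  moreover have "(\<integral>\<^sup>+ z. ennreal c * (ennreal (pmf q z) * indicator A z) \<partial>count_space UNIV) = ennreal c * (\<integral>\<^sup>+ z. ennreal (pmf q z) * indicator A z \<partial>count_space UNIV)"
    by (rule nn_integral_cmult) auto
  moreover have "(\<integral>\<^sup>+ z. ennreal (pmf q z) * indicator A z \<partial>count_space UNIV) = emeasure (measure_pmf q) A"
    by (subst nn_integral_indicator[symmetric]) (auto simp: nn_integral_measure_pmf)
  ultimately have "ennreal (measure_pmf.prob p A) \<ge> ennreal (c * measure_pmf.prob q A)"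
    by (simp add: measure_pmf.emeasure_eq_measure ennreal_mult' assms)
  thus ?thesis using assms by (simp add: ennreal_le_iff)
qed

lemma pois_tilt:
  assumes "a > 0"
  shows "pmf (poisson_pmf a) k = pmf (poisson_pmf (a * exp h)) k * exp (a * exp h - a - h * k)"
proof -
  have "a * exp h > 0" using assms by simp
  hence 1: "pmf (poisson_pmf (a * exp h)) k = (a * exp h)^k / fact k * exp (-(a*exp h))" by simp
  have 2: "pmf (poisson_pmf a) k = a^k / fact k * exp (-a)" using assms by simp
  have 3: "exp h ^ k = exp (h * k)" by (simp add: exp_of_nat_mult[symmetric] mult.commute)
  have "(a * exp h)^k / fact k * exp (-(a*exp h)) * exp (a * exp h - a - h * k)
     = a^k / fact k * (exp h ^ k * exp (-(a*exp h)) * exp (a * exp h - a - h * k))"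
    by (simp add: power_mult_distrib)
  also have "exp h ^ k * exp (-(a*exp h)) * exp (a * exp h - a - h * k) = exp (-a)"
    unfolding 3 by (simp add: exp_add[symmetric])
  finally show ?thesis unfolding 1 2 by simp
qed


lemma pois_upper_tail:
  assumes "a > 0" "h \<ge> 0"
  shows "measure_pmf.prob (poisson_pmf a) {k. real k \<ge> t} \<le> exp (a * (exp h - 1) - h * t)"
proof -
  have "measure_pmf.prob (poisson_pmf a) {k. real k \<ge> t} \<le> exp (a * (exp h - 1) - h * t) * measure_pmf.prob (poisson_pmf (a * exp h)) {k. real k \<ge> t}"
  proof (rule prob_le_pmf)
    fix k assume "k \<in> {k. real k \<ge> t}"
    hence "h * t \<le> h * k" using assms by (simp add: mult_left_mono)
    hence "exp (a * exp h - a - h * k) \<le> exp (a * (exp h - 1) - h * t)" by (simp add: algebra_simps)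
    thus "pmf (poisson_pmf a) k \<le> exp (a * (exp h - 1) - h * t) * pmf (poisson_pmf (a * exp h)) k"
      by (subst pois_tilt[OF assms(1), of _ h]) (simp add: mult.commute mult_left_mono)
  qed simp
  also have "\<dots> \<le> exp (a * (exp h - 1) - h * t)" by (simp add: mult_left_le)
  finally show ?thesis .
qed

lemma pois_lower_tail:
  assumes "a > 0" "h \<ge> 0"
  shows "measure_pmf.prob (poisson_pmf a) {k. real k \<le> t} \<le> exp (a * (exp (-h) - 1) + h * t)"
proof -
  have "measure_pmf.prob (poisson_pmf a) {k. real k \<le> t} \<le> exp (a * (exp (-h) - 1) + h * t) * measure_pmf.prob (poisson_pmf (a * exp (-h))) {k. real k \<le> t}"
  proof (rule prob_le_pmf)
    fix k assume "k \<in> {k. real k \<le> t}"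
    hence "h * k \<le> h * t" using assms by (simp add: mult_left_mono)
    hence "exp (a * exp (-h) - a - (-h) * k) \<le> exp (a * (exp (-h) - 1) + h * t)" by (simp add: algebra_simps)
    thus "pmf (poisson_pmf a) k \<le> exp (a * (exp (-h) - 1) + h * t) * pmf (poisson_pmf (a * exp (-h))) k"
      by (subst pois_tilt[OF assms(1), of _ "-h"]) (simp add: mult.commute mult_left_mono)
  qed simp
  also have "\<dots> \<le> exp (a * (exp (-h) - 1) + h * t)" by (simp add: mult_left_le)
  finally show ?thesis .
qed

lemma exp_minus_bound:
  assumes "(h::real) \<ge> 0"
  shows "exp (-h) \<le> 1 - h + h^2"
proof -
  have "1 + h \<le> exp h" by simp
  hence "exp (-h) \<le> 1 / (1 + h)" using assms by (simp add: exp_minus field_simps)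
  also have "1 / (1 + h) \<le> 1 - h + h^2"
    using assms by (simp add: field_simps power2_eq_square)
  finally show ?thesis .
qed

lemma pois_window:
  assumes "a \<ge> 4"
  shows "measure_pmf.prob (poisson_pmf a) {k. \<bar>real k - a\<bar> < 4 * sqrt a} \<ge> 1 - 2 * exp (-4)"
proof -
  define w where "w = 4 * sqrt a"
  define h where "h = w / (2 * a)"
  have a0: "a > 0" using assms by simp
  have sa: "sqrt a \<ge> 2" using assms real_sqrt_le_mono[of 4 a] by simp
  have ss: "sqrt a * sqrt a = a" using a0 by simp
  have w2: "w * w = 16 * a" using ss by (simp add: w_def)
  have h0: "h \<ge> 0" using a0 by (simp add: h_def w_def)
  have "2 * sqrt a \<le> sqrt a * sqrt a" using sa a0 by (intro mult_right_mono) auto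
  hence "w \<le> 2 * a" using ss by (simp add: w_def)
  hence h1: "h \<le> 1" using a0 by (simp add: h_def)
  have ah2: "a * h^2 = 4"
  proof -
    have "a * h^2 = (w * w) / (4 * a)" using a0 by (simp add: h_def power2_eq_square)
    thus ?thesis using w2 a0 by simp
  qed
  have hw: "h * w = 8"
  proof -
    have "h * w = (w * w) / (2 * a)" by (simp add: h_def)
    thus ?thesis using w2 a0 by simp
  qed
  have U: "measure_pmf.prob (poisson_pmf a) {k. real k \<ge> a + w} \<le> exp (-4)"
  proof -
    have "measure_pmf.prob (poisson_pmf a) {k. real k \<ge> a + w} \<le> exp (a * (exp h - 1) - h * (a + w))"
      by (rule pois_upper_tail[OF a0 h0])
    also have "\<dots> \<le> exp (-4)"
    proof -
      have "exp h - 1 \<le> h + h^2" using exp_bound[OF h0 h1] by simp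
      hence "a * (exp h - 1) \<le> a * (h + h^2)" using a0 by (simp add: mult_left_mono)
      hence "a * (exp h - 1) - h * (a + w) \<le> -4" using ah2 hw by (simp add: algebra_simps)
      thus ?thesis by simp
    qed
    finally show ?thesis .
  qed
  have L: "measure_pmf.prob (poisson_pmf a) {k. real k \<le> a - w} \<le> exp (-4)"
  proof -
    have "measure_pmf.prob (poisson_pmf a) {k. real k \<le> a - w} \<le> exp (a * (exp (-h) - 1) + h * (a - w))"
      by (rule pois_lower_tail[OF a0 h0])
    also have "\<dots> \<le> exp (-4)"
    proof -
      have "exp (-h) - 1 \<le> -h + h^2" using exp_minus_bound[OF h0] by simp
      hence "a * (exp (-h) - 1) \<le> a * (-h + h^2)" using a0 by (simp add: mult_left_mono)
      hence "a * (exp (-h) - 1) + h * (a - w) \<le> -4" using ah2 hw by (simp add: algebra_simps)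
      thus ?thesis by simp
    qed
    finally show ?thesis .
  qed
  let ?M = "poisson_pmf a"
  have "UNIV = {k. \<bar>real k - a\<bar> < w} \<union> ({k. real k \<ge> a + w} \<union> {k. real k \<le> a - w})" by auto
  hence "1 = measure_pmf.prob ?M ({k. \<bar>real k - a\<bar> < w} \<union> ({k. real k \<ge> a + w} \<union> {k. real k \<le> a - w}))"
    by (metis measure_pmf.prob_space space_measure_pmf)
  also have "\<dots> \<le> measure_pmf.prob ?M {k. \<bar>real k - a\<bar> < w} + measure_pmf.prob ?M ({k. real k \<ge> a + w} \<union> {k. real k \<le> a - w})"
    by (rule measure_subadditive) (auto simp: measure_pmf.emeasure_eq_measure)
  also have "measure_pmf.prob ?M ({k. real k \<ge> a + w} \<union> {k. real k \<le> a - w}) \<le> measure_pmf.prob ?M {k. real k \<ge> a + w} + measure_pmf.prob ?M {k. real k \<le> a - w}"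
    by (rule measure_subadditive) (auto simp: measure_pmf.emeasure_eq_measure)
  finally show ?thesis using U L by (simp add: w_def)
qed
definition Lam :: "real \<Rightarrow> real \<Rightarrow> real \<Rightarrow> real" where
  "Lam l l' t = l * (exp (-t) - 1) + l' * (exp t - 1)"

lemma pair_tilt:
  assumes "l > 0" "l' > 0"
  shows "pmf (pair_pmf (poisson_pmf l) (poisson_pmf l')) z =
    pmf (pair_pmf (poisson_pmf (l * exp (-t))) (poisson_pmf (l' * exp t))) z * exp (Lam l l' t - t * (real (snd z) - real (fst z)))"
proof -
  obtain x y where z: "z = (x, y)" by (cases z)
  have "pmf (pair_pmf (poisson_pmf l) (poisson_pmf l')) z = pmf (poisson_pmf l) x * pmf (poisson_pmf l') y"
    by (simp add: z pmf_pair)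
  also have "\<dots> = (pmf (poisson_pmf (l * exp (-t))) x * exp (l * exp (-t) - l - (-t) * x)) *
      (pmf (poisson_pmf (l' * exp t)) y * exp (l' * exp t - l' - t * y))"
    by (subst pois_tilt[OF assms(1), of _ "-t"], subst pois_tilt[OF assms(2), of _ t]) simp
  also have "\<dots> = pmf (poisson_pmf (l * exp (-t))) x * pmf (poisson_pmf (l' * exp t)) y *
      exp ((l * exp (-t) - l - (-t) * x) + (l' * exp t - l' - t * y))"
    by (simp add: exp_add)
  also have "(l * exp (-t) - l - (-t) * x) + (l' * exp t - l' - t * y) = Lam l l' t - t * (real y - real x)"
    by (simp add: Lam_def algebra_simps)
  finally show ?thesis by (simp add: z pmf_pair)
qed

lemma diff_tail:
  assumes "l > 0" "l' > 0" "t \<ge> 0"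
  shows "measure_pmf.prob (pair_pmf (poisson_pmf l) (poisson_pmf l')) {z. real (snd z) - real (fst z) > d}
     \<le> exp (Lam l l' t - t * d)"
proof -
  let ?Q = "pair_pmf (poisson_pmf (l * exp (-t))) (poisson_pmf (l' * exp t))"
  have "measure_pmf.prob (pair_pmf (poisson_pmf l) (poisson_pmf l')) {z. real (snd z) - real (fst z) > d}
     \<le> exp (Lam l l' t - t * d) * measure_pmf.prob ?Q {z. real (snd z) - real (fst z) > d}"
  proof (rule prob_le_pmf)
    fix z assume "z \<in> {z. real (snd z) - real (fst z) > d}"
    hence "t * d \<le> t * (real (snd z) - real (fst z))" using assms by (simp add: mult_left_mono)
    hence e: "exp (Lam l l' t - t * (real (snd z) - real (fst z))) \<le> exp (Lam l l' t - t * d)" by simp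
    have "pmf ?Q z * exp (Lam l l' t - t * (real (snd z) - real (fst z))) \<le> pmf ?Q z * exp (Lam l l' t - t * d)"
      by (rule mult_left_mono[OF e pmf_nonneg])
    thus "pmf (pair_pmf (poisson_pmf l) (poisson_pmf l')) z \<le> exp (Lam l l' t - t * d) * pmf ?Q z"
      by (subst pair_tilt[OF assms(1,2), of _ t]) (simp add: mult.commute)
  qed simp
  also have "\<dots> \<le> exp (Lam l l' t - t * d)" by (simp add: mult_left_le)
  finally show ?thesis .
qed

lemma pois_pair_bind:
  assumes "mu > 0"
  shows "pair_pmf (poisson_pmf mu) (poisson_pmf mu) =
     bind_pmf (poisson_pmf (2 * mu)) (\<lambda>m. map_pmf (\<lambda>k. (k, m - k)) (binomial_pmf m (1/2)))"
proof (rule pmf_eqI)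
  fix z :: "nat \<times> nat"
  obtain x y where z: "z = (x, y)" by (cases z)
  let ?c = "pmf (binomial_pmf (x + y) (1/2)) x"
  have pm: "pmf (map_pmf (\<lambda>k. (k, m - k)) (binomial_pmf m (1/2))) (x, y) = indicator {x + y} m * ?c" for m
  proof -
    have "pmf (map_pmf (\<lambda>k. (k, m - k)) (binomial_pmf m (1/2))) (x, y) =
        measure_pmf.prob (binomial_pmf m (1/2)) ((\<lambda>k. (k, m - k)) -` {(x, y)} \<inter> set_pmf (binomial_pmf m (1/2)))"
      unfolding pmf_map by (rule measure_Int_set_pmf[symmetric])
    also have "(\<lambda>k. (k, m - k)) -` {(x, y)} \<inter> set_pmf (binomial_pmf m (1/2)) = (if m = x + y then {x} else {})"
      by auto
    finally show ?thesis by (auto simp: measure_pmf_single)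
  qed
  have "pmf (bind_pmf (poisson_pmf (2 * mu)) (\<lambda>m. map_pmf (\<lambda>k. (k, m - k)) (binomial_pmf m (1/2)))) z =
      (\<integral>m. indicator {x + y} m * ?c \<partial>measure_pmf (poisson_pmf (2 * mu)))"
    by (simp add: pmf_bind z pm)
  also have "\<dots> = pmf (poisson_pmf (2 * mu)) (x + y) * ?c"
    by (simp add: measure_pmf_single)
  also have "\<dots> = pmf (poisson_pmf mu) x * pmf (poisson_pmf mu) y"
  proof -
    have "2 * mu > 0" using assms by simp
    have "pmf (poisson_pmf (2 * mu)) (x + y) = (2*mu)^(x+y) / fact (x+y) * exp (-(2*mu))"
      using assms by simp
    moreover have "?c = fact (x+y) / (fact x * fact y) * (1/2)^(x+y)"
      by (simp add: binomial_fact power_add)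
    moreover have "exp (-(2*mu)) = exp (-mu) * exp (-mu)" by (simp add: exp_add[symmetric])
    ultimately show ?thesis using assms
      by (simp add: power_add power_mult_distrib field_simps)
  qed
  finally show "pmf (pair_pmf (poisson_pmf mu) (poisson_pmf mu)) z = pmf (bind_pmf (poisson_pmf (2 * mu)) (\<lambda>m. map_pmf (\<lambda>k. (k, m - k)) (binomial_pmf m (1/2)))) z"
    by (simp add: z pmf_pair)
qed

lemma pval_valid:
  assumes "u \<ge> 0"
  shows "measure_pmf.prob (binomial_pmf m (1/2)) {k. pval k (m - k) \<le> u} \<le> u"
proof -
  let ?B = "binomial_pmf m (1/2)"
  define A where "A = {k. pval k (m - k) \<le> u} \<inter> {..m}"
  have sB: "set_pmf ?B = {..m}" by simp
  have eq: "measure_pmf.prob ?B {k. pval k (m - k) \<le> u} = measure_pmf.prob ?B A"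
    unfolding A_def by (metis measure_Int_set_pmf sB)
  show ?thesis
  proof (cases "A = {}")
    case True thus ?thesis using eq assms by simp
  next
    case False
    define f where "f = (\<lambda>k::nat. \<bar>real k - real m / 2\<bar>)"
    have fin: "finite A" unfolding A_def by simp
    have "Min (f ` A) \<in> f ` A" using fin False by (intro Min_in) auto
    then obtain k0 where k0: "k0 \<in> A" "f k0 = Min (f ` A)" by auto
    have sub: "A \<subseteq> {j. \<bar>real j - real m / 2\<bar> \<ge> \<bar>real k0 - real m / 2\<bar>}"
    proof
      fix j assume "j \<in> A"
      hence "Min (f ` A) \<le> f j" using fin by (intro Min_le) auto
      thus "j \<in> {j. \<bar>real j - real m / 2\<bar> \<ge> \<bar>real k0 - real m / 2\<bar>}" using k0 by (simp add: f_def)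
    qed
    have "k0 \<le> m" using k0 by (simp add: A_def)
    hence "pval k0 (m - k0) = measure_pmf.prob ?B {j. \<bar>real j - real m / 2\<bar> \<ge> \<bar>real k0 - real m / 2\<bar>}"
      by (simp add: pval_def Let_def)
    moreover have "pval k0 (m - k0) \<le> u" using k0 by (simp add: A_def)
    moreover have "measure_pmf.prob ?B A \<le> measure_pmf.prob ?B {j. \<bar>real j - real m / 2\<bar> \<ge> \<bar>real k0 - real m / 2\<bar>}"
      using sub by (intro measure_pmf.finite_measure_mono) auto
    ultimately show ?thesis using eq by simp
  qed
qed

lemma null_bound:
  assumes "mu > 0" "u \<ge> 0"
  shows "measure_pmf.prob (pair_pmf (poisson_pmf mu) (poisson_pmf mu)) {z. pval (fst z) (snd z) \<le> u} \<le> u"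
proof -
  let ?E = "{z. pval (fst z) (snd z) \<le> u}"
  have "emeasure (measure_pmf (pair_pmf (poisson_pmf mu) (poisson_pmf mu))) ?E =
     (\<integral>\<^sup>+m. emeasure (measure_pmf (map_pmf (\<lambda>k. (k, m - k)) (binomial_pmf m (1/2)))) ?E \<partial>measure_pmf (poisson_pmf (2 * mu)))"
    by (simp add: pois_pair_bind[OF assms(1)])
  also have "\<dots> \<le> (\<integral>\<^sup>+m. ennreal u \<partial>measure_pmf (poisson_pmf (2 * mu)))"
  proof (intro nn_integral_mono)
    fix m
    have "emeasure (measure_pmf (map_pmf (\<lambda>k. (k, m - k)) (binomial_pmf m (1/2)))) ?E =
        ennreal (measure_pmf.prob (binomial_pmf m (1/2)) {k. pval k (m - k) \<le> u})"
      by (simp add: measure_pmf.emeasure_eq_measure vimage_def)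
    also have "\<dots> \<le> ennreal u" using pval_valid[OF assms(2)] by (intro ennreal_leI) auto
    finally show "emeasure (measure_pmf (map_pmf (\<lambda>k. (k, m - k)) (binomial_pmf m (1/2)))) ?E \<le> ennreal u" .
  qed
  also have "\<dots> = ennreal u" by (simp add: measure_pmf.emeasure_space_1)
  finally show ?thesis using assms by (simp add: measure_pmf.emeasure_eq_measure ennreal_le_iff)
qed

lemma ub_fin:
  assumes "l > 0" "l' \<ge> l" "u \<ge> 0" "t \<ge> 0"
  defines "t0 \<equiv> ln (l' / l) / 2"
  shows "measure_pmf.prob (pair_pmf (poisson_pmf l) (poisson_pmf l')) {z. pval (fst z) (snd z) \<le> u}
     \<le> exp (Lam l l' (-t0) + t0 * d0) * u + exp (Lam l l' t - t * d0)"
proof -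
  let ?P = "pair_pmf (poisson_pmf l) (poisson_pmf l')"
  let ?E = "{z. pval (fst z) (snd z) \<le> u}"
  let ?F = "{z. real (snd z) - real (fst z) \<le> d0}"
  let ?G = "{z. real (snd z) - real (fst z) > d0}"
  have l'0: "l' > 0" using assms by simp
  have t00: "t0 \<ge> 0" using assms by (simp add: t0_def)
  define mu where "mu = sqrt (l * l')"
  have mu0: "mu > 0" using assms by (simp add: mu_def)
  have et0: "exp t0 = sqrt (l' / l)"
    using assms by (simp add: t0_def powr_half_sqrt[symmetric] powr_def)
  have sl: "sqrt l * sqrt l = l" "sqrt l' * sqrt l' = l'" using assms by auto
  have sl0: "sqrt l > 0" using assms by simp
  have "l * (sqrt l' / sqrt l) = (sqrt l * sqrt l) * (sqrt l' / sqrt l)" using sl by (simp only:)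
  also have "\<dots> = sqrt l * sqrt l'" using sl0 by (simp add: field_simps)
  finally have lq: "l * (sqrt l' / sqrt l) = sqrt l * sqrt l'" .
  have m1: "l * exp t0 = mu"
    unfolding et0 mu_def real_sqrt_divide real_sqrt_mult by (rule lq)
  have sl0': "sqrt l' > 0" using l'0 by simp
  have "l' * (sqrt l / sqrt l') = (sqrt l' * sqrt l') * (sqrt l / sqrt l')" using sl by (simp only:)
  also have "\<dots> = sqrt l * sqrt l'" using sl0' by (simp add: field_simps)
  finally have lq2: "l' * (sqrt l / sqrt l') = sqrt l * sqrt l'" .
  have emt: "exp (- t0) = sqrt l / sqrt l'" using sl0 sl0' by (simp add: exp_minus et0 real_sqrt_divide)
  have m2: "l' * exp (- t0) = mu"
    unfolding emt mu_def real_sqrt_mult by (rule lq2)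
  let ?c = "exp (Lam l l' (-t0) + t0 * d0)"
  have "measure_pmf.prob ?P (?E \<inter> ?F) \<le> ?c * measure_pmf.prob (pair_pmf (poisson_pmf mu) (poisson_pmf mu)) (?E \<inter> ?F)"
  proof (rule prob_le_pmf)
    fix z assume "z \<in> ?E \<inter> ?F"
    hence "t0 * (real (snd z) - real (fst z)) \<le> t0 * d0" using t00 by (simp add: mult_left_mono)
    hence e: "exp (Lam l l' (-t0) - (-t0) * (real (snd z) - real (fst z))) \<le> ?c" by simp
    have "pmf (pair_pmf (poisson_pmf mu) (poisson_pmf mu)) z * exp (Lam l l' (-t0) - (-t0) * (real (snd z) - real (fst z)))
       \<le> pmf (pair_pmf (poisson_pmf mu) (poisson_pmf mu)) z * ?c"
      by (rule mult_left_mono[OF e pmf_nonneg])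
    thus "pmf ?P z \<le> ?c * pmf (pair_pmf (poisson_pmf mu) (poisson_pmf mu)) z"
      using pair_tilt[OF assms(1) l'0, of z "-t0"] by (simp add: m1 m2 mult.commute)
  qed simp
  also have "\<dots> \<le> ?c * u"
  proof (rule mult_left_mono)
    have "measure_pmf.prob (pair_pmf (poisson_pmf mu) (poisson_pmf mu)) (?E \<inter> ?F) \<le> measure_pmf.prob (pair_pmf (poisson_pmf mu) (poisson_pmf mu)) ?E"
      by (intro measure_pmf.finite_measure_mono) auto
    also have "\<dots> \<le> u" by (rule null_bound[OF mu0 assms(3)])
    finally show "measure_pmf.prob (pair_pmf (poisson_pmf mu) (poisson_pmf mu)) (?E \<inter> ?F) \<le> u" .
  qed simp
  finally have 1: "measure_pmf.prob ?P (?E \<inter> ?F) \<le> ?c * u" .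
  have 2: "measure_pmf.prob ?P ?G \<le> exp (Lam l l' t - t * d0)"
    by (rule diff_tail[OF assms(1) l'0 assms(4)])
  have "measure_pmf.prob ?P ?E \<le> measure_pmf.prob ?P ((?E \<inter> ?F) \<union> ?G)"
    by (intro measure_pmf.finite_measure_mono) auto
  also have "\<dots> \<le> measure_pmf.prob ?P (?E \<inter> ?F) + measure_pmf.prob ?P ?G"
    by (rule measure_subadditive) (auto simp: measure_pmf.emeasure_eq_measure)
  finally show ?thesis using 1 2 by simp
qed

lemma lb_fin:
  assumes "l > 0" "l' > 0" "t \<ge> 0"
  defines "mx \<equiv> l * exp (-t)" and "my \<equiv> l' * exp t"
  assumes "mx \<ge> 4" "my \<ge> 4"
  defines "Dlow \<equiv> my - mx - 4 * sqrt mx - 4 * sqrt my"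
    and "Dhigh \<equiv> my - mx + 4 * sqrt mx + 4 * sqrt my"
    and "Sh \<equiv> mx + my + 4 * sqrt mx + 4 * sqrt my"
  assumes "Dlow > 0" "2 * exp (- (Dlow^2 / (2 * Sh))) \<le> u"
  shows "measure_pmf.prob (pair_pmf (poisson_pmf l) (poisson_pmf l')) {z. pval (fst z) (snd z) \<le> u}
     \<ge> (1 - 4 * exp (-4)) * exp (Lam l l' t - t * Dhigh)"
proof -
  let ?P = "pair_pmf (poisson_pmf l) (poisson_pmf l')"
  let ?Q = "pair_pmf (poisson_pmf mx) (poisson_pmf my)"
  let ?E = "{z. pval (fst z) (snd z) \<le> u}"
  define W1 where "W1 = {k. \<bar>real k - mx\<bar> < 4 * sqrt mx}"
  define W2 where "W2 = {k. \<bar>real k - my\<bar> < 4 * sqrt my}"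
  define R where "R = W1 \<times> W2"
  have RE: "R \<subseteq> ?E"
  proof
    fix z assume "z \<in> R"
    then obtain x y where z: "z = (x, y)" and x: "x \<in> W1" and y: "y \<in> W2" by (auto simp: R_def)
    define D where "D = real y - real x"
    define m where "m = x + y"
    have Dl: "D \<ge> Dlow" using x y by (simp add: D_def Dlow_def W1_def W2_def abs_less_iff)
    hence D0: "D > 0" using assms by simp
    have mS: "real m \<le> Sh" using x y by (simp add: m_def Sh_def W1_def W2_def abs_less_iff)
    have m0: "m > 0" using D0 by (simp add: D_def m_def)
    have absx: "\<bar>real x - real m / 2\<bar> = D / 2" using D0 by (simp add: D_def m_def)
    have "pval x y = measure_pmf.prob (binomial_pmf m (1/2)) {k. \<bar>real k - real m / 2\<bar> \<ge> \<bar>real x - real m / 2\<bar>}"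
      by (simp add: pval_def Let_def m_def)
    also have "\<dots> = measure_pmf.prob (binomial_pmf m (1/2)) {k. \<bar>real k - real m / 2\<bar> \<ge> D / 2}"
      by (simp only: absx)
    also have "\<dots> = measure_pmf.prob (binomial_pmf m (1/2)) {k. \<bar>real k - real m * (1/2)\<bar> \<ge> D / 2}"
      by simp
    also have "\<dots> \<le> 2 * exp (-2 * (D/2)^2 / m)"
      by (rule binomial_distribution.prob_abs_ge) (use m0 D0 in \<open>auto simp: binomial_distribution_def\<close>)
    also have "-2 * (D/2)^2 / m \<le> - (Dlow^2 / (2 * Sh))"
    proof -
      have "Dlow^2 \<le> D^2" using Dl assms by (intro power_mono) auto
      moreover have "Dlow^2 / (2 * Sh) \<le> D^2 / (2 * Sh)" using calculation mS m0
        by (intro divide_right_mono) auto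
      moreover have "D^2 / (2 * Sh) \<le> D^2 / (2 * m)" using mS m0
        by (intro divide_left_mono) auto
      ultimately show ?thesis by (simp add: power2_eq_square)
    qed
    hence "2 * exp (-2 * (D/2)^2 / m) \<le> 2 * exp (- (Dlow^2 / (2 * Sh)))" by simp
    finally show "z \<in> ?E" using assms z by simp
  qed
  have "measure_pmf.prob ?P ?E \<ge> measure_pmf.prob ?P R"
    using RE by (intro measure_pmf.finite_measure_mono) auto
  moreover have "measure_pmf.prob ?P R \<ge> exp (Lam l l' t - t * Dhigh) * measure_pmf.prob ?Q R"
  proof (rule prob_ge_pmf)
    fix z assume "z \<in> R"
    then obtain x y where z: "z = (x, y)" and x: "x \<in> W1" and y: "y \<in> W2" by (auto simp: R_def)
    have "real y - real x \<le> Dhigh" using x y by (simp add: Dhigh_def W1_def W2_def abs_less_iff)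
    hence "t * (real y - real x) \<le> t * Dhigh" using assms by (simp add: mult_left_mono)
    hence e: "exp (Lam l l' t - t * Dhigh) \<le> exp (Lam l l' t - t * (real (snd z) - real (fst z)))" by (simp add: z)
    have "pmf ?Q z * exp (Lam l l' t - t * Dhigh) \<le> pmf ?Q z * exp (Lam l l' t - t * (real (snd z) - real (fst z)))"
      by (rule mult_left_mono[OF e pmf_nonneg])
    thus "exp (Lam l l' t - t * Dhigh) * pmf ?Q z \<le> pmf ?P z"
      using pair_tilt[OF assms(1,2), of z t] by (simp add: mx_def my_def mult.commute)
  qed simp
  moreover have "measure_pmf.prob ?Q R \<ge> 1 - 4 * exp (-4)"
  proof -
    have w1: "measure_pmf.prob (poisson_pmf mx) W1 \<ge> 1 - 2 * exp (-4)" unfolding W1_def by (rule pois_window) fact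
    have w2: "measure_pmf.prob (poisson_pmf my) W2 \<ge> 1 - 2 * exp (-4)" unfolding W2_def by (rule pois_window) fact
    have c1: "measure_pmf.prob ?Q (fst -` (- W1)) = 1 - measure_pmf.prob (poisson_pmf mx) W1"
    proof -
      have "measure_pmf.prob ?Q (fst -` (- W1)) = measure_pmf.prob (map_pmf fst ?Q) (- W1)" by simp
      also have "\<dots> = measure_pmf.prob (poisson_pmf mx) (UNIV - W1)" by (simp add: map_fst_pair_pmf Compl_eq_Diff_UNIV)
      also have "\<dots> = 1 - measure_pmf.prob (poisson_pmf mx) W1" by (rule measure_pmf.prob_compl[simplified])
      finally show ?thesis .
    qed
    have c2: "measure_pmf.prob ?Q (snd -` (- W2)) = 1 - measure_pmf.prob (poisson_pmf my) W2"
    proof -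
      have "measure_pmf.prob ?Q (snd -` (- W2)) = measure_pmf.prob (map_pmf snd ?Q) (- W2)" by simp
      also have "\<dots> = measure_pmf.prob (poisson_pmf my) (UNIV - W2)" by (simp add: map_snd_pair_pmf Compl_eq_Diff_UNIV)
      also have "\<dots> = 1 - measure_pmf.prob (poisson_pmf my) W2" by (rule measure_pmf.prob_compl[simplified])
      finally show ?thesis .
    qed
    have "UNIV = R \<union> (fst -` (- W1) \<union> snd -` (- W2))" by (auto simp: R_def)
    hence "1 = measure_pmf.prob ?Q (R \<union> (fst -` (- W1) \<union> snd -` (- W2)))"
      by (metis measure_pmf.prob_space space_measure_pmf)
    also have "\<dots> \<le> measure_pmf.prob ?Q R + measure_pmf.prob ?Q (fst -` (- W1) \<union> snd -` (- W2))"
      by (rule measure_subadditive) (auto simp: measure_pmf.emeasure_eq_measure)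
    also have "measure_pmf.prob ?Q (fst -` (- W1) \<union> snd -` (- W2)) \<le> measure_pmf.prob ?Q (fst -` (- W1)) + measure_pmf.prob ?Q (snd -` (- W2))"
      by (rule measure_subadditive) (auto simp: measure_pmf.emeasure_eq_measure)
    finally show ?thesis using c1 c2 w1 w2 by simp
  qed
  moreover have "1 - 4 * exp (-4::real) \<ge> 0"
  proof -
    have "exp (-4::real) \<le> exp (-2)" by simp
    moreover have "exp (-2::real) \<le> 1/4"
    proof -
      have e1: "(2::real) \<le> exp 1" using exp_ge_add_one_self[of 1] by simp
      have "2 * 2 \<le> exp 1 * exp (1::real)" using mult_mono[OF e1 e1] by simp
      hence "4 \<le> exp (2::real)" by (simp add: exp_add[symmetric])
      thus ?thesis by (simp add: exp_minus field_simps)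
    qed
    ultimately show ?thesis by linarith
  qed
  ultimately show ?thesis
    by (smt (verit) exp_gt_zero mult_left_mono mult.commute)
qed

lemma lim1: "((\<lambda>h::real. (exp (-h) - 1 + h * exp (-h)) / h^2) \<longlongrightarrow> -1/2) (at 0)" by real_asymp
lemma lim2: "((\<lambda>h::real. (exp h - 1 - h * exp h) / h^2) \<longlongrightarrow> -1/2) (at 0)" by real_asymp
lemma lim3: "((\<lambda>h::real. (exp h - exp (-h)) / h) \<longlongrightarrow> 2) (at 0)" by real_asymp
lemma lim4: "((\<lambda>h::real. (exp (-h) - 1 + h) / h^2) \<longlongrightarrow> 1/2) (at 0)" by real_asymp
lemma lim5: "((\<lambda>h::real. (exp h - 1 - h) / h^2) \<longlongrightarrow> 1/2) (at 0)" by real_asymp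
lemma lim6: "((\<lambda>h::real. (exp h - 1) / h) \<longlongrightarrow> 1) (at 0)" by real_asymp
lemma lim7: "((\<lambda>g::real. (2 * sqrt (1 + g) - 2 - g) / g^2) \<longlongrightarrow> -1/4) (at 0)" by real_asymp
lemma lim8: "((\<lambda>g::real. ln (1 + g) / g) \<longlongrightarrow> 1) (at 0)" by real_asymp

lemma comp0:
  assumes "(f \<longlongrightarrow> c) (at 0)" "g \<longlonglongrightarrow> 0" "\<forall>\<^sub>F N in sequentially. g N \<noteq> (0::real)"
  shows "(\<lambda>N. f (g N)) \<longlonglongrightarrow> c"
proof -
  have "filterlim g (at 0) sequentially" using assms(2,3) by (simp add: filterlim_at)
  thus ?thesis using assms(1) by (rule filterlim_compose[of f, rotated])
qed

locale asy =
  fixes lam s rho L :: "nat \<Rightarrow> real" and rho0 :: real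
  assumes s0: "s \<longlonglongrightarrow> 0" and spos: "\<forall>\<^sub>F N in sequentially. s N > 0"
  and rho: "rho \<longlonglongrightarrow> rho0"
  and Ltop: "filterlim L at_top sequentially"
  and Leq: "\<forall>\<^sub>F N in sequentially. L N = lam N * (s N)^2"
  and lampos: "\<forall>\<^sub>F N in sequentially. lam N > 0"
  and rho0pos: "rho0 > 0"
begin

lemma Lpos: "\<forall>\<^sub>F N in sequentially. L N > 0"
  using Ltop by (simp add: filterlim_at_top_dense)

lemma sqrtL: "\<forall>\<^sub>F N in sequentially. sqrt (L N) = sqrt (lam N) * s N"
  using Leq spos lampos by eventually_elim (simp add: real_sqrt_mult)

lemma lam_top: "filterlim lam at_top sequentially"
proof (rule filterlim_at_top_mono[OF Ltop])
  have "\<forall>\<^sub>F N in sequentially. s N < 1" using s0 by (rule order_tendstoD) simp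
  thus "\<forall>\<^sub>F N in sequentially. L N \<le> lam N"
    using Leq spos lampos
  proof eventually_elim
    case (elim N)
    hence "(s N)^2 \<le> 1" by (simp add: power_le_one)
    thus ?case using elim by (simp add: mult_left_le)
  qed
qed

lemma inv_sqrtlam: "(\<lambda>N. 1 / sqrt (lam N)) \<longlonglongrightarrow> 0"
proof -
  have "filterlim (\<lambda>N. sqrt (lam N)) at_top sequentially"
    using lam_top filterlim_compose[OF sqrt_at_top] by blast
  thus ?thesis by (simp add: tendsto_divide_0[OF tendsto_const] filterlim_at_top_imp_at_infinity)
qed

lemma sqlam: "\<forall>\<^sub>F N in sequentially. sqrt (lam N) * sqrt (lam N) = lam N"
  by (rule eventually_mono[OF lampos]) simp

lemma rhos0: "(\<lambda>N. rho N * s N) \<longlonglongrightarrow> 0"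
  using tendsto_mult[OF rho s0] by simp

lemma rhospos: "\<forall>\<^sub>F N in sequentially. rho N * s N > 0"
proof -
  have "\<forall>\<^sub>F N in sequentially. rho N > 0" using rho rho0pos by (rule order_tendstoD)
  thus ?thesis using spos by eventually_elim simp
qed

lemma sqrtL_top: "filterlim (\<lambda>N. sqrt (L N)) at_top sequentially"
  using Ltop filterlim_compose[OF sqrt_at_top] by blast

lemma inv_sqrtL: "(\<lambda>N. 1 / sqrt (L N)) \<longlonglongrightarrow> 0"
  using sqrtL_top by (simp add: tendsto_divide_0[OF tendsto_const] filterlim_at_top_imp_at_infinity)


lemma u1: "(\<lambda>N. (Lam (lam N) (lam N * (1 + rho N * s N)) (-(ln (1 + rho N * s N) / 2))
     + ln (1 + rho N * s N) / 2 * (c0 * lam N * s N)) / L N) \<longlonglongrightarrow> - (rho0^2 / 4) + c0 * rho0 / 2"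
proof -
  have gne: "\<forall>\<^sub>F N in sequentially. rho N * s N \<noteq> 0" by (rule eventually_mono[OF rhospos]) (metis less_irrefl)
  have t7: "(\<lambda>N. (2 * sqrt (1 + rho N * s N) - 2 - rho N * s N) / (rho N * s N)^2) \<longlonglongrightarrow> -1/4"
    by (rule comp0[OF lim7 rhos0 gne])
  have t8: "(\<lambda>N. ln (1 + rho N * s N) / (rho N * s N)) \<longlonglongrightarrow> 1"
    by (rule comp0[OF lim8 rhos0 gne])
  have "(\<lambda>N. (rho N)^2 * ((2 * sqrt (1 + rho N * s N) - 2 - rho N * s N) / (rho N * s N)^2)
       + c0 * rho N * (ln (1 + rho N * s N) / (rho N * s N)) / 2) \<longlonglongrightarrow> rho0^2 * (-1/4) + c0 * rho0 * 1 / 2"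
    by (intro tendsto_intros t7 t8 rho) simp
  hence lim: "(\<lambda>N. (rho N)^2 * ((2 * sqrt (1 + rho N * s N) - 2 - rho N * s N) / (rho N * s N)^2)
       + c0 * rho N * (ln (1 + rho N * s N) / (rho N * s N)) / 2) \<longlonglongrightarrow> - (rho0^2 / 4) + c0 * rho0 / 2"
    by simp
  show ?thesis
  proof (rule Lim_transform_eventually[OF lim])
    show "\<forall>\<^sub>F N in sequentially. (rho N)^2 * ((2 * sqrt (1 + rho N * s N) - 2 - rho N * s N) / (rho N * s N)^2)
       + c0 * rho N * (ln (1 + rho N * s N) / (rho N * s N)) / 2 =
      (Lam (lam N) (lam N * (1 + rho N * s N)) (-(ln (1 + rho N * s N) / 2))
     + ln (1 + rho N * s N) / 2 * (c0 * lam N * s N)) / L N"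
      using Leq spos lampos rhospos
    proof eventually_elim
      case (elim N)
      define g where "g = rho N * s N"
      define w where "w = sqrt (1 + g)"
      have g0: "g > 0" using elim by (simp add: g_def)
      have w0: "w > 0" using g0 by (simp add: w_def)
      have ww: "w * w = 1 + g" using g0 by (simp add: w_def)
      have e1: "exp (ln (1 + g) / 2) = w"
        using g0 by (simp add: w_def powr_half_sqrt[symmetric] powr_def)
      have e2: "exp (- (ln (1 + g) / 2)) = 1 / w" using e1 by (simp add: exp_minus inverse_eq_divide)
      have "(1 + g) * (1 / w - 1) = w - (1 + g)" using w0 by (simp add: ww[symmetric] field_simps)
      note h = this
      have "Lam (lam N) (lam N * (1 + g)) (-(ln (1 + g) / 2)) = lam N * (w - 1) + lam N * ((1 + g) * (1 / w - 1))"
        unfolding Lam_def minus_minus e1 e2 by (simp add: mult.assoc)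
      also have "\<dots> = lam N * (w - 1) + lam N * (w - (1 + g))" by (simp only: h)
      also have "\<dots> = lam N * (2 * w - 2 - g)" by (simp add: algebra_simps)
      finally have lamv: "Lam (lam N) (lam N * (1 + g)) (-(ln (1 + g) / 2)) = lam N * (2 * w - 2 - g)" .
      have rs: "rho N = g / s N" using elim by (simp add: g_def)
      show ?case unfolding g_def[symmetric] w_def[symmetric] lamv elim(1) using elim(2,3) g0
        by (simp add: rs field_simps power2_eq_square)
    qed
  qed
qed

context fixes kk :: real assumes kpos: "kk > 0"
begin

lemma h0: "(\<lambda>N. kk * s N) \<longlonglongrightarrow> 0"
  using tendsto_mult[OF tendsto_const s0, of kk] by simp

lemma hne: "\<forall>\<^sub>F N in sequentially. kk * s N \<noteq> 0"
  by (rule eventually_mono[OF spos]) (use kpos in simp)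

lemma a1: "(\<lambda>N. (Lam (lam N) (lam N * (1 + rho N * s N)) (kk * s N)
     - kk * s N * (lam N * (1 + rho N * s N) * exp (kk * s N) - lam N * exp (-(kk * s N)))) / L N) \<longlonglongrightarrow> (- (kk^2))"
proof -
  define F1 where "F1 = (\<lambda>h::real. (exp (-h) - 1 + h * exp (-h)) / h^2)"
  define F2 where "F2 = (\<lambda>h::real. (exp h - 1 - h * exp h) / h^2)"
  have t1: "(\<lambda>N. F1 (kk * s N)) \<longlonglongrightarrow> (-1/2)" unfolding F1_def by (rule comp0[OF lim1 h0 hne])
  have t2: "(\<lambda>N. F2 (kk * s N)) \<longlonglongrightarrow> (-1/2)" unfolding F2_def by (rule comp0[OF lim2 h0 hne])
  have "(\<lambda>N. kk^2 * (F1 (kk * s N) + F2 (kk * s N)) + rho N * kk * (kk * s N) * F2 (kk * s N)) \<longlonglongrightarrow>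
     kk^2 * (-1/2 + -1/2) + rho0 * kk * 0 * (-1/2)"
    by (intro tendsto_intros t1 t2 rho h0)
  hence lim: "(\<lambda>N. kk^2 * (F1 (kk * s N) + F2 (kk * s N)) + rho N * kk * (kk * s N) * F2 (kk * s N)) \<longlonglongrightarrow> (- (kk^2))"
    by simp
  show ?thesis
  proof (rule Lim_transform_eventually[OF lim])
    show "\<forall>\<^sub>F N in sequentially. kk^2 * (F1 (kk * s N) + F2 (kk * s N)) + rho N * kk * (kk * s N) * F2 (kk * s N) =
      (Lam (lam N) (lam N * (1 + rho N * s N)) (kk * s N)
     - kk * s N * (lam N * (1 + rho N * s N) * exp (kk * s N) - lam N * exp (-(kk * s N)))) / L N"
      using Leq spos lampos
    proof eventually_elim
      case (elim N)
      thus ?case using kpos by (simp add: F1_def F2_def Lam_def field_simps power2_eq_square)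
    qed
  qed
qed


lemma a2: "(\<lambda>N. kk * s N * (sqrt (lam N * exp (-(kk * s N))) + sqrt (lam N * (1 + rho N * s N) * exp (kk * s N))) / L N) \<longlonglongrightarrow> 0"
proof -
  have "(\<lambda>N. kk * (sqrt (exp (-(kk * s N))) + sqrt ((1 + rho N * s N) * exp (kk * s N))) * (1 / sqrt (L N))) \<longlonglongrightarrow>
      kk * (sqrt (exp (-(kk * 0))) + sqrt ((1 + rho0 * 0) * exp (kk * 0))) * 0"
    by (intro tendsto_intros s0 rho inv_sqrtL)
  hence lim: "(\<lambda>N. kk * (sqrt (exp (-(kk * s N))) + sqrt ((1 + rho N * s N) * exp (kk * s N))) * (1 / sqrt (L N))) \<longlonglongrightarrow> 0"
    by simp
  show ?thesis
  proof (rule Lim_transform_eventually[OF lim])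
    show "\<forall>\<^sub>F N in sequentially. kk * (sqrt (exp (-(kk * s N))) + sqrt ((1 + rho N * s N) * exp (kk * s N))) * (1 / sqrt (L N)) =
       kk * s N * (sqrt (lam N * exp (-(kk * s N))) + sqrt (lam N * (1 + rho N * s N) * exp (kk * s N))) / L N"
      using Leq spos lampos sqrtL sqlam
    proof eventually_elim
      case (elim N)
      define z where "z = sqrt (lam N)"
      have z0: "z > 0" using elim by (simp add: z_def)
      have lz: "lam N = z * z" using elim by (simp add: z_def)
      have sL: "sqrt (L N) = z * s N" using elim by (simp add: real_sqrt_mult z_def)
      show ?case using kpos z0 elim(2) unfolding real_sqrt_mult z_def[symmetric] sL elim(1) lz
        by (simp add: field_simps power2_eq_square)
    qed
  qed
qed

lemma b_lim: "(\<lambda>N. (lam N * (1 + rho N * s N) * exp (kk * s N) - lam N * exp (-(kk * s N))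
     - 4 * sqrt (lam N * exp (-(kk * s N))) - 4 * sqrt (lam N * (1 + rho N * s N) * exp (kk * s N))) / (lam N * s N))
   \<longlonglongrightarrow> 2 * kk + rho0"
proof -
  have t3: "(\<lambda>N. (exp (kk * s N) - exp (-(kk * s N))) / (kk * s N)) \<longlonglongrightarrow> 2"
    by (rule comp0[OF lim3 h0 hne])
  have "(\<lambda>N. kk * ((exp (kk * s N) - exp (-(kk * s N))) / (kk * s N)) + rho N * exp (kk * s N)
      - 4 * (sqrt (exp (-(kk * s N))) + sqrt ((1 + rho N * s N) * exp (kk * s N))) * (1 / sqrt (L N))) \<longlonglongrightarrow>
      kk * 2 + rho0 * exp (kk * 0) - 4 * (sqrt (exp (-(kk * 0))) + sqrt ((1 + rho0 * 0) * exp (kk * 0))) * 0"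
    by (intro tendsto_intros s0 rho inv_sqrtL t3)
  hence lim: "(\<lambda>N. kk * ((exp (kk * s N) - exp (-(kk * s N))) / (kk * s N)) + rho N * exp (kk * s N)
      - 4 * (sqrt (exp (-(kk * s N))) + sqrt ((1 + rho N * s N) * exp (kk * s N))) * (1 / sqrt (L N))) \<longlonglongrightarrow> 2 * kk + rho0"
    by (simp add: mult.commute)
  show ?thesis
  proof (rule Lim_transform_eventually[OF lim])
    show "\<forall>\<^sub>F N in sequentially. kk * ((exp (kk * s N) - exp (-(kk * s N))) / (kk * s N)) + rho N * exp (kk * s N)
      - 4 * (sqrt (exp (-(kk * s N))) + sqrt ((1 + rho N * s N) * exp (kk * s N))) * (1 / sqrt (L N)) =
      (lam N * (1 + rho N * s N) * exp (kk * s N) - lam N * exp (-(kk * s N))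
     - 4 * sqrt (lam N * exp (-(kk * s N))) - 4 * sqrt (lam N * (1 + rho N * s N) * exp (kk * s N))) / (lam N * s N)"
      using Leq spos lampos sqrtL sqlam
    proof eventually_elim
      case (elim N)
      define z where "z = sqrt (lam N)"
      have z0: "z > 0" using elim by (simp add: z_def)
      have lz: "lam N = z * z" using elim by (simp add: z_def)
      have sL: "sqrt (L N) = z * s N" using elim by (simp add: real_sqrt_mult z_def)
      show ?case using kpos z0 elim(2) unfolding real_sqrt_mult z_def[symmetric] sL elim(1) lz
        by (simp add: field_simps power2_eq_square)
    qed
  qed
qed

lemma c_lim: "(\<lambda>N. (lam N * exp (-(kk * s N)) + lam N * (1 + rho N * s N) * exp (kk * s N)
     + 4 * sqrt (lam N * exp (-(kk * s N))) + 4 * sqrt (lam N * (1 + rho N * s N) * exp (kk * s N))) / lam N)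
   \<longlonglongrightarrow> 2"
proof -
  have "(\<lambda>N. exp (-(kk * s N)) + (1 + rho N * s N) * exp (kk * s N)
      + 4 * (sqrt (exp (-(kk * s N))) + sqrt ((1 + rho N * s N) * exp (kk * s N))) * (1 / sqrt (lam N))) \<longlonglongrightarrow>
      exp (-(kk * 0)) + (1 + rho0 * 0) * exp (kk * 0) + 4 * (sqrt (exp (-(kk * 0))) + sqrt ((1 + rho0 * 0) * exp (kk * 0))) * 0"
    by (intro tendsto_intros s0 rho inv_sqrtlam)
  hence lim: "(\<lambda>N. exp (-(kk * s N)) + (1 + rho N * s N) * exp (kk * s N)
      + 4 * (sqrt (exp (-(kk * s N))) + sqrt ((1 + rho N * s N) * exp (kk * s N))) * (1 / sqrt (lam N))) \<longlonglongrightarrow> 2"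
    by simp
  show ?thesis
  proof (rule Lim_transform_eventually[OF lim])
    show "\<forall>\<^sub>F N in sequentially. exp (-(kk * s N)) + (1 + rho N * s N) * exp (kk * s N)
      + 4 * (sqrt (exp (-(kk * s N))) + sqrt ((1 + rho N * s N) * exp (kk * s N))) * (1 / sqrt (lam N)) =
      (lam N * exp (-(kk * s N)) + lam N * (1 + rho N * s N) * exp (kk * s N)
     + 4 * sqrt (lam N * exp (-(kk * s N))) + 4 * sqrt (lam N * (1 + rho N * s N) * exp (kk * s N))) / lam N"
      using Leq spos lampos sqrtL sqlam
    proof eventually_elim
      case (elim N)
      define z where "z = sqrt (lam N)"
      have z0: "z > 0" using elim by (simp add: z_def)
      have lz: "lam N = z * z" using elim by (simp add: z_def)
      have sL: "sqrt (L N) = z * s N" using elim by (simp add: real_sqrt_mult z_def)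
      show ?case using kpos z0 elim(2) unfolding real_sqrt_mult z_def[symmetric] sL elim(1) lz
        by (simp add: field_simps power2_eq_square)
    qed
  qed
qed

lemma mx_top: "filterlim (\<lambda>N. lam N * exp (-(kk * s N))) at_top sequentially"
proof -
  have "(\<lambda>N. exp (-(kk * s N))) \<longlonglongrightarrow> exp (-(kk * 0))" by (intro tendsto_intros s0)
  hence "(\<lambda>N. exp (-(kk * s N))) \<longlonglongrightarrow> 1" by simp
  thus ?thesis by (rule filterlim_tendsto_pos_mult_at_top[OF _ _ lam_top, THEN filterlim_cong[THEN iffD1, rotated 3]]) auto
qed

lemma my_top: "filterlim (\<lambda>N. lam N * (1 + rho N * s N) * exp (kk * s N)) at_top sequentially"
proof -
  have "(\<lambda>N. (1 + rho N * s N) * exp (kk * s N)) \<longlonglongrightarrow> (1 + rho0 * 0) * exp (kk * 0)" by (intro tendsto_intros s0 rho)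
  hence "(\<lambda>N. (1 + rho N * s N) * exp (kk * s N)) \<longlonglongrightarrow> 1" by simp
  from filterlim_tendsto_pos_mult_at_top[OF this _ lam_top]
  have "filterlim (\<lambda>N. (1 + rho N * s N) * exp (kk * s N) * lam N) at_top sequentially" by simp
  thus ?thesis by (simp add: mult_ac)
qed

lemma u2: "(\<lambda>N. (Lam (lam N) (lam N * (1 + rho N * s N)) (kk * s N) - kk * s N * (c0 * lam N * s N)) / L N)
   \<longlonglongrightarrow> kk^2 + rho0 * kk - c0 * kk"
proof -
  have t4: "(\<lambda>N. (exp (-(kk * s N)) - 1 + kk * s N) / (kk * s N)^2) \<longlonglongrightarrow> 1/2"
    by (rule comp0[OF lim4 h0 hne])
  have t5: "(\<lambda>N. (exp (kk * s N) - 1 - kk * s N) / (kk * s N)^2) \<longlonglongrightarrow> 1/2"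
    by (rule comp0[OF lim5 h0 hne])
  have t6: "(\<lambda>N. (exp (kk * s N) - 1) / (kk * s N)) \<longlonglongrightarrow> 1"
    by (rule comp0[OF lim6 h0 hne])
  have "(\<lambda>N. kk^2 * ((exp (-(kk * s N)) - 1 + kk * s N) / (kk * s N)^2 + (exp (kk * s N) - 1 - kk * s N) / (kk * s N)^2)
      + rho N * kk * ((exp (kk * s N) - 1) / (kk * s N)) - kk * c0) \<longlonglongrightarrow>
      kk^2 * (1/2 + 1/2) + rho0 * kk * 1 - kk * c0"
    by (intro tendsto_intros t4 t5 t6 rho)
  hence lim: "(\<lambda>N. kk^2 * ((exp (-(kk * s N)) - 1 + kk * s N) / (kk * s N)^2 + (exp (kk * s N) - 1 - kk * s N) / (kk * s N)^2)
      + rho N * kk * ((exp (kk * s N) - 1) / (kk * s N)) - kk * c0) \<longlonglongrightarrow> kk^2 + rho0 * kk - c0 * kk"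
    by (simp add: mult_ac)
  show ?thesis
  proof (rule Lim_transform_eventually[OF lim])
    show "\<forall>\<^sub>F N in sequentially. kk^2 * ((exp (-(kk * s N)) - 1 + kk * s N) / (kk * s N)^2 + (exp (kk * s N) - 1 - kk * s N) / (kk * s N)^2)
      + rho N * kk * ((exp (kk * s N) - 1) / (kk * s N)) - kk * c0 =
      (Lam (lam N) (lam N * (1 + rho N * s N)) (kk * s N) - kk * s N * (c0 * lam N * s N)) / L N"
      using Leq spos lampos
    proof eventually_elim
      case (elim N)
      thus ?case using kpos by (simp add: Lam_def field_simps power2_eq_square)
    qed
  qed
qed

end
end

lemma powr_ln_self:
  assumes "N > (1::real)" "f > 0"
  shows "N powr (ln f / ln N) = f"
  using assms by (simp add: powr_def)

lemma delta_lower: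
  fixes f :: "nat \<Rightarrow> real" and a :: real
  assumes H: "\<And>\<eta>. \<eta> > 0 \<Longrightarrow> \<forall>\<^sub>F N in sequentially. f N \<ge> real N powr (-a - \<eta>)"
  shows "\<exists>\<delta>. \<delta> \<longlonglongrightarrow> 0 \<and> (\<forall>\<^sub>F N in sequentially. f N \<ge> real N powr (-a + \<delta> N))"
proof -
  define \<delta> where "\<delta> N = (if 1 < N \<and> f N > 0 then min 0 (ln (f N) / ln (real N) + a) else 0)" for N
  have ev1: "\<forall>\<^sub>F N in sequentially. 1 < N" by (simp add: eventually_gt_at_top)
  have pos: "\<forall>\<^sub>F N in sequentially. f N > 0"
    using H[OF zero_less_one] ev1
  proof eventually_elim
    case (elim N)
    have "real N powr (-a - 1) > 0" using elim by simp
    thus ?case using elim by linarith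
  qed
  have "\<delta> \<longlonglongrightarrow> 0"
  proof (rule order_tendstoI)
    fix y :: real assume "y > 0"
    show "\<forall>\<^sub>F N in sequentially. \<delta> N < y" using \<open>y > 0\<close> by (intro always_eventually allI) (auto simp: \<delta>_def)
  next
    fix y :: real assume y: "y < 0"
    have yy: "-y/2 > 0" using y by simp
      show "\<forall>\<^sub>F N in sequentially. y < \<delta> N"
      using H[OF yy] ev1 pos
    proof eventually_elim
      case (elim N)
      have lnN: "ln (real N) > 0" using elim by simp
      have "ln (real N powr (-a - (-y/2))) \<le> ln (f N)" using elim by (subst ln_le_cancel_iff) auto
      hence "(-a + y/2) * ln (real N) \<le> ln (f N)" using elim by (simp add: ln_powr)
      hence "-a + y/2 \<le> ln (f N) / ln (real N)" using lnN by (simp add: field_simps)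
      thus ?case using elim y by (simp add: \<delta>_def)
    qed
  qed
  moreover have "\<forall>\<^sub>F N in sequentially. f N \<ge> real N powr (-a + \<delta> N)"
    using ev1 pos
  proof eventually_elim
    case (elim N)
    have "-a + \<delta> N \<le> ln (f N) / ln (real N)" using elim by (simp add: \<delta>_def)
    hence "real N powr (-a + \<delta> N) \<le> real N powr (ln (f N) / ln (real N))"
      using elim by (intro powr_mono) auto
    also have "\<dots> = f N" using elim by (intro powr_ln_self) auto
    finally show ?case .
  qed
  ultimately show ?thesis by blast
qed

lemma delta_upper:
  fixes f :: "nat \<Rightarrow> real" and a :: real
  assumes H: "\<And>\<eta>. \<eta> > 0 \<Longrightarrow> \<forall>\<^sub>F N in sequentially. f N \<le> real N powr (-a + \<eta>)"
  shows "\<exists>\<delta>. \<delta> \<longlonglongrightarrow> 0 \<and> (\<forall>\<^sub>F N in sequentially. f N \<le> real N powr (-a + \<delta> N))"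
proof -
  define \<delta> where "\<delta> N = (if 1 < N \<and> f N > 0 then max 0 (ln (f N) / ln (real N) + a) else 0)" for N
  have ev1: "\<forall>\<^sub>F N in sequentially. 1 < N" by (simp add: eventually_gt_at_top)
  have "\<delta> \<longlonglongrightarrow> 0"
  proof (rule order_tendstoI)
    fix y :: real assume "y < 0"
    show "\<forall>\<^sub>F N in sequentially. y < \<delta> N" using \<open>y < 0\<close> by (intro always_eventually allI) (auto simp: \<delta>_def)
  next
    fix y :: real assume y: "y > 0"
    have yy: "y/2 > 0" using y by simp
      show "\<forall>\<^sub>F N in sequentially. \<delta> N < y"
      using H[OF yy] ev1
    proof eventually_elim
      case (elim N)
      show ?case
      proof (cases "f N > 0")
        case True
        have lnN: "ln (real N) > 0" using elim by simp
        have "ln (f N) \<le> ln (real N powr (-a + y/2))" using elim True by (subst ln_le_cancel_iff) auto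
        hence "ln (f N) \<le> (-a + y/2) * ln (real N)" using elim by (simp add: ln_powr)
        hence "ln (f N) / ln (real N) \<le> -a + y/2" using lnN by (simp add: field_simps)
        thus ?thesis using elim y True by (simp add: \<delta>_def)
      qed (use y in \<open>simp add: \<delta>_def\<close>)
    qed
  qed
  moreover have "\<forall>\<^sub>F N in sequentially. f N \<le> real N powr (-a + \<delta> N)"
    using ev1
  proof eventually_elim
    case (elim N)
    show ?case
    proof (cases "f N > 0")
      case True
      have "f N = real N powr (ln (f N) / ln (real N))" using elim True by (intro powr_ln_self[symmetric]) auto
      also have "\<dots> \<le> real N powr (-a + \<delta> N)"
        using elim True by (intro powr_mono) (auto simp: \<delta>_def)
      finally show ?thesis .
    qed (smt (verit) powr_ge_zero)
  qed
  ultimately show ?thesis by blast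
qed




lemma exp4: "1 - 4 * exp (-4::real) \<ge> 1/2"
proof -
  have e1: "(2::real) \<le> exp 1" using exp_ge_add_one_self[of 1] by simp
  have "2 * 2 \<le> exp 1 * exp (1::real)" using mult_mono[OF e1 e1] by simp
  hence e2: "4 \<le> exp (2::real)" by (simp add: exp_add[symmetric])
  have "4 * 4 \<le> exp 2 * exp (2::real)" using mult_mono[OF e2 e2] by simp
  hence "16 \<le> exp (4::real)" by (simp add: exp_add[symmetric])
  thus ?thesis by (simp add: exp_minus field_simps)
qed

theorem lemma5:
  fixes r q :: real and lam lam' eps :: "nat \<Rightarrow> real"
  assumes r_pos: "r > 0"
    and q_gt: "q > r / 2"
    and lam_growth: "filterlim (\<lambda>N. lam N / ln (real N)) at_top sequentially"
    and eps_lim: "eps \<longlonglongrightarrow> 0"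
    and lam'_def: "\<And>N. lam' N = lam N + sqrt (2 * lam N * r * ln (real N) * (1 + eps N))"
  defines "P \<equiv> (\<lambda>N. measure_pmf.prob (pair_pmf (poisson_pmf (lam N)) (poisson_pmf (lam' N)))
                   {(x, y). pval x y \<le> real N powr (- q)})"
  shows "(\<exists>\<delta> :: nat \<Rightarrow> real. \<delta> \<longlonglongrightarrow> 0 \<and>
            (\<forall>\<^sub>F N in sequentially. P N \<ge> real N powr (- alpha_high q r + \<delta> N)))
       \<and> (\<exists>\<delta>1 \<delta>2 :: nat \<Rightarrow> real. \<delta>1 \<longlonglongrightarrow> 0 \<and> \<delta>2 \<longlonglongrightarrow> 0 \<and>
            (\<forall>\<^sub>F N in sequentially.
               P N \<le> real N powr (- 1 + \<delta>1 N) + real N powr (- alpha_high q r + \<delta>2 N)))"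
proof -
  define L where "L N = ln (real N)" for N
  define s where "s N = sqrt (L N / lam N)" for N
  define rho where "rho N = sqrt (2 * r * (1 + eps N))" for N
  define rho0 where "rho0 = sqrt (2 * r)"
  define k0 where "k0 = sqrt q - sqrt (r / 2)"
  define al where "al = alpha_high q r"
  have al: "al = k0^2" by (simp add: al_def alpha_high_def k0_def)
  have rho0pos: "rho0 > 0" using r_pos by (simp add: rho0_def)
  have rho0eq: "rho0 = 2 * sqrt (r / 2)"
  proof -
    have "sqrt (2 * r) = sqrt (4 * (r / 2))" by simp
    also have "\<dots> = sqrt 4 * sqrt (r / 2)" by (rule real_sqrt_mult)
    also have "sqrt 4 = (2::real)" by simp
    finally show ?thesis by (simp add: rho0_def)
  qed
  have k0pos: "k0 > 0" using q_gt by (simp add: k0_def)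
  have sqr: "sqrt (r/2) ^ 2 = r / 2" using r_pos by simp
  have sqq: "sqrt q ^ 2 = q" using q_gt r_pos by simp
  have ev1: "\<forall>\<^sub>F N in sequentially. 1 < N" by (simp add: eventually_gt_at_top)
  have Ltop: "filterlim L at_top sequentially"
    unfolding L_def by (rule filterlim_compose[OF ln_at_top filterlim_real_sequentially])
  have Lpos: "\<forall>\<^sub>F N in sequentially. L N > 0"
    using ev1 by eventually_elim (simp add: L_def)
  have "\<forall>\<^sub>F N in sequentially. lam N / ln (real N) > 0"
    using lam_growth by (simp add: filterlim_at_top_dense)
  hence lampos: "\<forall>\<^sub>F N in sequentially. lam N > 0"
    using Lpos by eventually_elim (auto simp: L_def zero_less_divide_iff)
  have Llam0: "(\<lambda>N. L N / lam N) \<longlonglongrightarrow> 0"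
  proof -
    have "(\<lambda>N. inverse (lam N / ln (real N))) \<longlonglongrightarrow> 0"
      by (rule tendsto_inverse_0_at_top[OF lam_growth])
    thus ?thesis by (simp add: L_def)
  qed
  have s0: "s \<longlonglongrightarrow> 0"
    using tendsto_real_sqrt[OF Llam0] by (simp add: s_def[abs_def])
  have spos: "\<forall>\<^sub>F N in sequentially. s N > 0"
    using Lpos lampos by eventually_elim (simp add: s_def)
  have Leq: "\<forall>\<^sub>F N in sequentially. L N = lam N * (s N)^2"
    using Lpos lampos by eventually_elim (simp add: s_def)
  have rho: "rho \<longlonglongrightarrow> rho0"
  proof -
    have "(\<lambda>N. sqrt (2 * r * (1 + eps N))) \<longlonglongrightarrow> sqrt (2 * r * (1 + 0))"
      by (intro tendsto_intros eps_lim)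
    thus ?thesis by (simp add: rho_def[abs_def] rho0_def)
  qed
  interpret asy lam s rho L rho0
    by unfold_locales (fact s0 spos rho Ltop Leq lampos rho0pos)+
  have lam'eq: "\<forall>\<^sub>F N in sequentially. lam' N = lam N * (1 + rho N * s N)"
  proof -
    have "\<forall>\<^sub>F N in sequentially. eps N > -1" using eps_lim by (rule order_tendstoD) simp
    thus ?thesis using Lpos lampos
    proof eventually_elim
      case (elim N)
      have "lam N * (rho N * s N) = sqrt (lam N * lam N) * (rho N * s N)" using elim by simp
      also have "\<dots> = sqrt (lam N * lam N * (2 * r * (1 + eps N)) * (L N / lam N))"
        by (simp only: rho_def s_def real_sqrt_mult mult.assoc)
      also have "lam N * lam N * (2 * r * (1 + eps N)) * (L N / lam N) = 2 * lam N * r * ln (real N) * (1 + eps N)"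
        using elim by (simp add: L_def field_simps)
      finally show ?case by (simp add: lam'_def algebra_simps)
    qed
  qed
  define E where "E N = {z :: nat \<times> nat. pval (fst z) (snd z) \<le> real N powr (- q)}" for N
  have Peq: "\<forall>\<^sub>F N in sequentially. P N = measure_pmf.prob (pair_pmf (poisson_pmf (lam N)) (poisson_pmf (lam N * (1 + rho N * s N)))) (E N)"
    using lam'eq
  proof eventually_elim
    case (elim N)
    have "{(x, y). pval x y \<le> real N powr (- q)} = E N" by (auto simp: E_def)
    thus ?case using elim by (simp add: P_def)
  qed
  have powrL: "\<forall>\<^sub>F N in sequentially. (\<forall>x. real N powr x = exp (x * L N))"
    using ev1 by eventually_elim (simp add: powr_def L_def)
  have low: "\<forall>\<^sub>F N in sequentially. P N \<ge> real N powr (- al - \<eta>)" if eta: "\<eta> > 0" for \<eta>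
  proof -
    define kk where "kk = sqrt (al + \<eta>/2)"
    have al0: "al \<ge> 0" by (simp add: al)
    have kkpos: "kk > 0" using al0 eta by (simp add: kk_def)
    have kk2: "kk^2 = al + \<eta>/2" using al0 eta by (simp add: kk_def)
    have "k0 = sqrt al" using k0pos by (simp add: al)
    hence kkgt: "kk > k0" using eta by (simp add: kk_def)
    define c where "c = (2 * kk + rho0)^2 / (2 * 2)"
    have cq: "c > q"
    proof -
      have "2 * kk + rho0 > 2 * sqrt q" using kkgt unfolding rho0eq k0_def by simp
      hence "(2 * sqrt q)^2 < (2 * kk + rho0)^2" using q_gt r_pos by (intro power_strict_mono) auto
      thus ?thesis using sqq by (simp add: c_def power_mult_distrib)
    qed
    define mx where "mx N = lam N * exp (-(kk * s N))" for N
    define my where "my N = lam N * (1 + rho N * s N) * exp (kk * s N)" for N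
    have T1: "(\<lambda>N. (Lam (lam N) (lam N * (1 + rho N * s N)) (kk * s N)
     - kk * s N * (lam N * (1 + rho N * s N) * exp (kk * s N) - lam N * exp (-(kk * s N)))) / L N
     - 4 * (kk * s N * (sqrt (lam N * exp (-(kk * s N))) + sqrt (lam N * (1 + rho N * s N) * exp (kk * s N))) / L N))
       \<longlonglongrightarrow> - (kk^2) - 4 * 0"
      by (intro tendsto_intros a1[OF kkpos] a2[OF kkpos])
    have T1': "\<forall>\<^sub>F N in sequentially. (Lam (lam N) (lam N * (1 + rho N * s N)) (kk * s N)
     - kk * s N * (lam N * (1 + rho N * s N) * exp (kk * s N) - lam N * exp (-(kk * s N)))) / L N
     - 4 * (kk * s N * (sqrt (lam N * exp (-(kk * s N))) + sqrt (lam N * (1 + rho N * s N) * exp (kk * s N))) / L N)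
       > - al - 3 * \<eta> / 4"
      using eta kk2 by (intro order_tendstoD(1)[OF T1]) simp
    define X where "X N = ((my N - mx N - 4 * sqrt (mx N) - 4 * sqrt (my N)) / (lam N * s N))^2
        / (2 * ((mx N + my N + 4 * sqrt (mx N) + 4 * sqrt (my N)) / lam N))" for N
    have T2: "X \<longlonglongrightarrow> (2 * kk + rho0)^2 / (2 * 2)"
      unfolding X_def[abs_def] mx_def my_def
      by (intro tendsto_intros b_lim[OF kkpos] c_lim[OF kkpos]) simp
    have X1: "\<forall>\<^sub>F N in sequentially. X N > (c + q) / 2"
      using cq by (intro order_tendstoD(1)[OF T2]) (simp add: c_def)
    have Dpos: "\<forall>\<^sub>F N in sequentially. (my N - mx N - 4 * sqrt (mx N) - 4 * sqrt (my N)) / (lam N * s N) > 0"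
      using kkpos rho0pos unfolding mx_def my_def by (intro order_tendstoD(1)[OF b_lim[OF kkpos]]) simp
    have ln2: "(\<lambda>N. ln 2 / L N) \<longlonglongrightarrow> 0"
      by (rule tendsto_divide_0[OF tendsto_const]) (use Ltop in \<open>simp add: filterlim_at_top_imp_at_infinity\<close>)
    have ln2': "\<forall>\<^sub>F N in sequentially. ln 2 / L N < (c - q) / 2"
      using cq by (intro order_tendstoD(2)[OF ln2]) simp
    have mx4: "\<forall>\<^sub>F N in sequentially. mx N \<ge> 4"
      using mx_top[OF kkpos] unfolding mx_def[symmetric] filterlim_at_top by blast
    have my4: "\<forall>\<^sub>F N in sequentially. my N \<ge> 4"
      using my_top[OF kkpos] unfolding my_def[symmetric] filterlim_at_top by blast
    have pw: "(\<lambda>N. real N powr (-(\<eta>/4))) \<longlonglongrightarrow> 0"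
      by (rule tendsto_neg_powr[OF _ filterlim_real_sequentially]) (use eta in simp)
    have pw': "\<forall>\<^sub>F N in sequentially. real N powr (-(\<eta>/4)) < 1/2"
      by (intro order_tendstoD(2)[OF pw]) simp
    show ?thesis using T1' X1 Dpos ln2' mx4 my4 pw' Peq lampos spos rhospos Lpos powrL Leq
    proof eventually_elim
      case (elim N)
      let ?l' = "lam N * (1 + rho N * s N)"
      define Dl where "Dl = my N - mx N - 4 * sqrt (mx N) - 4 * sqrt (my N)"
      define Sh where "Sh = mx N + my N + 4 * sqrt (mx N) + 4 * sqrt (my N)"
      define Dh where "Dh = my N - mx N + 4 * sqrt (mx N) + 4 * sqrt (my N)"
      have ls: "lam N * s N > 0" using elim by simp
      have Dl0: "Dl > 0" using elim(3) ls by (simp add: Dl_def zero_less_divide_iff)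
      have "sqrt (mx N) \<ge> 0" "sqrt (my N) \<ge> 0" using elim(5,6) by auto
      hence Sh0: "Sh > 0" using elim(5,6) unfolding Sh_def by linarith
      have l'0: "?l' > 0" using elim by simp
      have XL: "X N * L N = Dl^2 / (2 * Sh)"
        using ls Sh0 elim(14) elim(9,10) unfolding X_def Dl_def[symmetric] Sh_def[symmetric]
        by (simp add: field_simps power2_eq_square)
      have "X N > q + ln 2 / L N"
      proof -
        have "ln 2 / L N < (c - q) / 2" using elim(4) .
        moreover have "(c + q) / 2 < X N" using elim(2) .
        ultimately show ?thesis by (simp add: field_simps)
      qed
      hence "X N * L N > (q + ln 2 / L N) * L N" using elim(12) by (simp add: mult_strict_right_mono)
      moreover have "(q + ln 2 / L N) * L N = q * L N + ln 2" using elim(12) by (simp add: field_simps)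
      ultimately have "Dl^2 / (2 * Sh) > q * L N + ln 2" using XL by linarith
      hence "exp (- (Dl^2 / (2 * Sh))) < exp (- (q * L N + ln 2))" by simp
      also have "exp (- (q * L N + ln 2)) = exp (- q * L N) / 2" by (simp add: exp_diff exp_minus field_simps)
      finally have cond: "2 * exp (- (Dl^2 / (2 * Sh))) \<le> real N powr (- q)" using elim(13) by simp
      have hP: "P N \<ge> (1 - 4 * exp (-4)) * exp (Lam (lam N) ?l' (kk * s N) - kk * s N * Dh)"
        using lb_fin[of "lam N" ?l' "kk * s N" "real N powr (- q)"] elim(8,9,10) l'0 kkpos elim(5,6) Dl0 cond
        by (simp add: E_def Dl_def Dh_def Sh_def mx_def my_def)
      moreover have hE: "exp (Lam (lam N) ?l' (kk * s N) - kk * s N * Dh) \<ge> exp ((- al - 3 * \<eta> / 4) * L N)"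
      proof -
        have "(Lam (lam N) ?l' (kk * s N) - kk * s N * Dh) / L N > - al - 3 * \<eta> / 4"
        proof -
          have gen: "(A - t * (B - C + 4 * x + 4 * y)) / LL = (A - t * (B - C)) / LL - 4 * (t * (x + y) / LL)"
            if "LL > 0" for A t B C x y LL :: real using that by (simp add: field_simps)
          show ?thesis using elim(1) unfolding Dh_def mx_def my_def gen[OF elim(12)] .
        qed
        thus ?thesis using elim(12) by (simp add: less_divide_eq)
      qed
      ultimately have "P N \<ge> 1/2 * exp ((- al - 3 * \<eta> / 4) * L N)"
      proof -
        have "1/2 * exp ((- al - 3 * \<eta> / 4) * L N) \<le> (1 - 4 * exp (-4)) * exp (Lam (lam N) ?l' (kk * s N) - kk * s N * Dh)"
          by (rule mult_mono[OF exp4 hE]) (use exp4 in auto)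
        thus ?thesis using hP by linarith
      qed
      moreover have "1/2 * exp ((- al - 3 * \<eta> / 4) * L N) \<ge> real N powr (- al - \<eta>)"
      proof -
        have "real N powr (- al - \<eta>) = real N powr (-(\<eta>/4)) * exp ((- al - 3 * \<eta> / 4) * L N)"
          using elim(13) by (simp add: exp_add[symmetric] algebra_simps)
        also have "\<dots> \<le> 1/2 * exp ((- al - 3 * \<eta> / 4) * L N)"
          using elim(7) by (intro mult_right_mono) auto
        finally show ?thesis .
      qed
      ultimately show ?case by linarith
    qed
  qed
  have up: "\<forall>\<^sub>F N in sequentially. P N \<le> real N powr (- al + \<eta>)" if eta: "\<eta> > 0" for \<eta>
  proof -
    define c0 where "c0 = 2 * sqrt q"
    have v1: "- (rho0^2 / 4) + c0 * rho0 / 2 - q = - al"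
      unfolding al k0_def rho0eq c0_def using sqr sqq by (simp add: power2_eq_square algebra_simps)
    have v2: "k0^2 + rho0 * k0 - c0 * k0 = - al"
      unfolding al k0_def rho0eq c0_def by (simp add: power2_eq_square algebra_simps)
    have A1: "\<forall>\<^sub>F N in sequentially. (Lam (lam N) (lam N * (1 + rho N * s N)) (-(ln (1 + rho N * s N) / 2))
     + ln (1 + rho N * s N) / 2 * (c0 * lam N * s N)) / L N < - (rho0^2 / 4) + c0 * rho0 / 2 + \<eta>/2"
      using eta by (intro order_tendstoD(2)[OF u1]) simp
    have B1: "\<forall>\<^sub>F N in sequentially. (Lam (lam N) (lam N * (1 + rho N * s N)) (k0 * s N) - k0 * s N * (c0 * lam N * s N)) / L N
      < -al + \<eta>/2"
      using eta v2 by (intro order_tendstoD(2)[OF u2[OF k0pos]]) simp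
    have ex: "filterlim (\<lambda>N. exp (\<eta>/2 * L N)) at_top sequentially"
      by (rule filterlim_compose[OF exp_at_top filterlim_tendsto_pos_mult_at_top[OF tendsto_const _ Ltop]]) (use eta in simp)
    have ex2: "\<forall>\<^sub>F N in sequentially. exp (\<eta>/2 * L N) > 2"
      using ex by (simp add: filterlim_at_top_dense)
    show ?thesis using A1 B1 ex2 Peq lampos spos rhospos Lpos powrL
    proof eventually_elim
      case (elim N)
      let ?l = "lam N" and ?l' = "lam N * (1 + rho N * s N)"
      have ll: "?l' / ?l = 1 + rho N * s N" using elim by simp
      have "?l \<le> ?l'" using elim by (simp add: mult_le_cancel_left1)
      from ub_fin[OF _ this _ _, of "real N powr (- q)" "k0 * s N" "c0 * lam N * s N"]
      have "P N \<le> exp (Lam ?l ?l' (-(ln (1 + rho N * s N) / 2)) + ln (1 + rho N * s N) / 2 * (c0 * lam N * s N)) * real N powr (- q)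
          + exp (Lam ?l ?l' (k0 * s N) - k0 * s N * (c0 * lam N * s N))"
        using elim k0pos by (simp add: ll E_def)
      also have "\<dots> < exp ((-al + \<eta>/2) * L N) + exp ((-al + \<eta>/2) * L N)"
      proof (rule add_less_le_mono)
        have "Lam ?l ?l' (-(ln (1 + rho N * s N) / 2)) + ln (1 + rho N * s N) / 2 * (c0 * lam N * s N)
            < (- (rho0^2 / 4) + c0 * rho0 / 2 + \<eta>/2) * L N"
          using elim by (simp add: divide_less_eq)
        note this
        have "Lam ?l ?l' (-(ln (1 + rho N * s N) / 2)) + ln (1 + rho N * s N) / 2 * (c0 * lam N * s N) + (- q) * L N
            < (-al + \<eta>/2) * L N"
        proof -
          have "(- (rho0^2 / 4) + c0 * rho0 / 2 + \<eta>/2) * L N + (- q) * L N = ((- (rho0^2 / 4) + c0 * rho0 / 2 - q) + \<eta>/2) * L N"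
            by (simp add: algebra_simps)
          also have "\<dots> = (-al + \<eta>/2) * L N" by (simp only: v1)
          finally show ?thesis using \<open>Lam ?l ?l' (-(ln (1 + rho N * s N) / 2)) + ln (1 + rho N * s N) / 2 * (c0 * lam N * s N)
            < (- (rho0^2 / 4) + c0 * rho0 / 2 + \<eta>/2) * L N\<close> by linarith
        qed
        thus "exp (Lam ?l ?l' (-(ln (1 + rho N * s N) / 2)) + ln (1 + rho N * s N) / 2 * (c0 * lam N * s N)) * real N powr (- q)
          < exp ((-al + \<eta>/2) * L N)" using elim by (simp add: exp_add[symmetric])
        have "Lam ?l ?l' (k0 * s N) - k0 * s N * (c0 * lam N * s N) < (-al + \<eta>/2) * L N"
          using elim by (simp add: divide_less_eq)
        thus "exp (Lam ?l ?l' (k0 * s N) - k0 * s N * (c0 * lam N * s N)) \<le> exp ((-al + \<eta>/2) * L N)" by simp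
      qed
      also have "\<dots> = 2 * exp ((-al + \<eta>/2) * L N)" by simp
      also have "\<dots> \<le> exp (\<eta>/2 * L N) * exp ((-al + \<eta>/2) * L N)"
        using elim by (intro mult_right_mono) auto
      also have "\<dots> = real N powr (- al + \<eta>)" using elim by (simp add: exp_add[symmetric] algebra_simps)
      finally show ?case by simp
    qed
  qed
  obtain d where d: "d \<longlonglongrightarrow> 0" "\<forall>\<^sub>F N in sequentially. P N \<ge> real N powr (- al + d N)"
    using delta_lower[where f=P and a=al] low by blast
  obtain d2 where d2: "d2 \<longlonglongrightarrow> 0" "\<forall>\<^sub>F N in sequentially. P N \<le> real N powr (- al + d2 N)"
    using delta_upper[where f=P and a=al] up by blast
  have "\<forall>\<^sub>F N in sequentially. P N \<le> real N powr (- 1 + (\<lambda>_. 0) N) + real N powr (- al + d2 N)"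
    using d2(2) by eventually_elim (smt (verit) powr_ge_zero)
  moreover have "(\<lambda>_. 0::real) \<longlonglongrightarrow> 0" by simp
  ultimately show ?thesis using d d2 unfolding al_def by blast
qed


end
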